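(* Let $\mathbf W\succ0$ be symmetric $n\times n$ and $\mathbf S\sim\mathcal D$ a random matrix in $\mathbb{R}^{n\times\tau}$. For any $\mathbf M,\mathbf N\in\mathbb{R}^{d\times n}$ and any realization of $\mathbf S$, $$\|\mathbf M(\mathbf I-\Pi_{\mathbf S})+\mathbf N\Pi_{\mathbf S}\|_{\mathbf W^{-1}}^2=\|\mathbf M(\mathbf I-\Pi_{\mathbf S})\|_{\mathbf W^{-1}}^2+\|\mathbf N\Pi_{\mathbf S}\|_{\mathbf W^{-1}}^2,$$ and $\mathbb{E}_{\mathcal D}\|\mathbf N\Pi_{\mathbf S}\|_{\mathbf W^{-1}}^2=\|\mathbf N\|^2_{\mathbb{E}_{\mathcal D}[\mathbf H_{\mathbf S}]}$. Furthermore, $$\mathbb{E}_{\mathcal D}\|\mathbf M(\mathbf I-\Pi_{\mathbf S})+\mathbf N\Pi_{\mathbf S}\|_{\mathbf W^{-1}}^2\le(1-\kappa)\|\mathbf M\|_{\mathbf W^{-1}}^2+\|\mathbf N\|^2_{\mathbb{E}_{\mathcal D}[\mathbf H_{\mathbf S}]}.$$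
   Context: $\Pi_{\mathbf S}=\mathbf S(\mathbf S^\top\mathbf W\mathbf S)^\dagger\mathbf S^\top\mathbf W$, $\mathbf H_{\mathbf S}=\mathbf S(\mathbf S^\top\mathbf W\mathbf S)^\dagger\mathbf S^\top$. For a symmetric positive semidefinite $\mathbf B$, $\|\mathbf X\|_{\mathbf B}^2=\mathrm{Tr}(\mathbf X\mathbf B\mathbf X^\top)$; in particular $\|\mathbf X\|_{\mathbf W^{-1}}^2=\mathrm{Tr}(\mathbf X\mathbf W^{-1}\mathbf X^\top)$. $\kappa=\lambda_{\min}(\mathbb{E}_{\mathcal D}[\Pi_{\mathbf S}])$ (equivalently $\lambda_{\min}(\mathbf W^{1/2}\mathbb{E}[\mathbf H_{\mathbf S}]\mathbf W^{1/2})$). *)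

theory Defs
  imports "HOL-Analysis.Analysis" "HOL-Probability.Probability"
begin

definition sym_pos_def :: "real^'n^'n \<Rightarrow> bool" where
  "sym_pos_def W \<longleftrightarrow> transpose W = W \<and> (\<forall>x. x \<noteq> 0 \<longrightarrow> x \<bullet> (W *v x) > 0)"

definition is_pinv :: "real^'n^'m \<Rightarrow> real^'m^'n \<Rightarrow> bool" where
  "is_pinv A X \<longleftrightarrow> A ** X ** A = A \<and> X ** A ** X = X
     \<and> transpose (A ** X) = A ** X \<and> transpose (X ** A) = X ** A"

definition pinv :: "real^'n^'m \<Rightarrow> real^'m^'n" where
  "pinv A = (THE X. is_pinv A X)"

definition Hmat :: "real^'n^'n \<Rightarrow> real^'t^'n \<Rightarrow> real^'n^'n" where
  "Hmat W S = S ** pinv (transpose S ** W ** S) ** transpose S"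

definition Pimat :: "real^'n^'n \<Rightarrow> real^'t^'n \<Rightarrow> real^'n^'n" where
  "Pimat W S = S ** pinv (transpose S ** W ** S) ** transpose S ** W"

definition wnormsq :: "real^'n^'n \<Rightarrow> real^'n^'d \<Rightarrow> real" where
  "wnormsq B X = trace (X ** B ** transpose X)"

definition lambda_min :: "real^'n^'n \<Rightarrow> real" where
  "lambda_min A = Min {c. \<exists>v. v \<noteq> 0 \<and> A *v v = c *\<^sub>R v}"

definition kappa :: "real^'n^'n \<Rightarrow> (real^'t^'n) measure \<Rightarrow> real" where
  "kappa W D = lambda_min (\<integral>S. Pimat W S \<partial>D)"

end

theory Submission
  imports Defs
begin


lemma mm_add_rdistrib: "((A::real^'n^'m) + B) ** C = A ** C + B ** C"
  by (vector matrix_matrix_mult_def sum.distrib[symmetric] field_simps)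
lemma mm_diff_rdistrib: "((A::real^'n^'m) - B) ** C = A ** C - B ** C"
  by (vector matrix_matrix_mult_def sum_subtractf[symmetric] field_simps)
lemma mm_diff_ldistrib: "(A::real^'n^'m) ** (B - C) = A ** B - A ** C"
  by (vector matrix_matrix_mult_def sum_subtractf[symmetric] field_simps)
lemma transpose_add': "transpose ((A::real^'n^'m) + B) = transpose A + transpose B"
  by (vector transpose_def)
lemma transpose_diff': "transpose ((A::real^'n^'m) - B) = transpose A - transpose B"
  by (vector transpose_def)

lemma pinv_unique:
  fixes A :: "real^'n^'m"
  assumes X: "is_pinv A X" and Y: "is_pinv A Y"
  shows "X = Y"
proof -
  have x1: "A ** X ** A = A" and x2: "X ** A ** X = X" and x3: "transpose (A ** X) = A ** X"
    and x4: "transpose (X ** A) = X ** A" using X by (auto simp: is_pinv_def)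
  have y1: "A ** Y ** A = A" and y2: "Y ** A ** Y = Y" and y3: "transpose (A ** Y) = A ** Y"
    and y4: "transpose (Y ** A) = Y ** A" using Y by (auto simp: is_pinv_def)
  have "X = X ** (A ** X)" using x2 by (simp add: matrix_mul_assoc)
  also have "\<dots> = X ** transpose (A ** X)" using x3 by simp
  also have "\<dots> = X ** transpose (A ** Y ** A ** X)" using y1 by simp
  also have "\<dots> = X ** (transpose (A ** X) ** transpose (A ** Y))"
    by (simp add: matrix_transpose_mul matrix_mul_assoc)
  also have "\<dots> = X ** A ** X ** A ** Y" using x3 y3 by (simp add: matrix_mul_assoc)
  also have "\<dots> = X ** A ** Y" using x2 by simp
  finally have 1: "X = X ** A ** Y" .
  have "Y = (Y ** A) ** Y" using y2 by simp
  also have "\<dots> = transpose (Y ** A) ** Y" using y4 by simp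
  also have "\<dots> = transpose (Y ** A ** X ** A) ** Y" by (metis x1 matrix_mul_assoc)
  also have "\<dots> = transpose (X ** A) ** transpose (Y ** A) ** Y"
    by (simp add: matrix_transpose_mul matrix_mul_assoc)
  also have "\<dots> = X ** A ** Y ** A ** Y" using x4 y4 by (simp add: matrix_mul_assoc)
  also have "\<dots> = X ** A ** Y" by (metis y2 matrix_mul_assoc)
  finally show ?thesis using 1 by simp
qed



lemma sym_inner:
  fixes A :: "real^'n^'n"
  assumes "transpose A = A"
  shows "(A *v x) \<bullet> y = x \<bullet> (A *v y)"
proof -
  have "x \<bullet> (A *v y) = (x v* A) \<bullet> y" by (simp add: dot_lmul_matrix)
  also have "x v* A = transpose A *v x" by simp
  finally show ?thesis using assms by simp
qed

lemma sym_from_inner: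
  fixes C :: "real^'n^'n"
  assumes "\<And>z w. (C *v z) \<bullet> w = z \<bullet> (C *v w)"
  shows "transpose C = C"
proof -
  have "transpose C *v w = C *v w" for w
  proof -
    have "(transpose C *v w - C *v w) \<bullet> z = 0" for z
    proof -
      have "(transpose C *v w) \<bullet> z = w \<bullet> (C *v z)" by (simp add: dot_lmul_matrix)
      also have "\<dots> = (C *v w) \<bullet> z" using assms[of z w] by (simp add: inner_commute)
      finally show ?thesis by (simp add: inner_diff_left)
    qed
    from this[of "transpose C *v w - C *v w"] show ?thesis by simp
  qed
  then show ?thesis by (simp add: matrix_eq)
qed

lemma pinv_exists_sym:
  fixes A :: "real^'n^'n"
  assumes symA: "transpose A = A"
  shows "\<exists>X. is_pinv A X"
proof -
  define R where "R = range ((*v) A)"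
  have linA: "linear ((*v) A)" by simp
  have subR: "subspace R" unfolding R_def by (rule linear_subspace_image[OF linA subspace_UNIV])
  have sym: "(A *v x) \<bullet> y = x \<bullet> (A *v y)" for x y using sym_inner[OF symA] .
  have decomp: "\<exists>r\<in>R. A *v r = A *v z \<and> (\<forall>u. (z - r) \<bullet> (A *v u) = 0)" for z
  proof -
    obtain y k where y: "y \<in> span R" and k: "\<And>w. w \<in> span R \<Longrightarrow> orthogonal k w" and zk: "z = y + k"
      using orthogonal_subspace_decomp_exists[of R z] by blast
    have yR: "y \<in> R" using y subR by (metis span_eq_iff)
    have ko: "k \<bullet> (A *v u) = 0" for u
      using k[of "A *v u"] by (simp add: R_def span_base orthogonal_def)
    have "(A *v k) \<bullet> (A *v k) = 0" using ko[of "A *v k"] by (simp add: sym)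
    then have Ak: "A *v k = 0" by simp
    show ?thesis using yR ko Ak zk by (intro bexI[of _ y]) (auto simp: matrix_vector_right_distrib)
  qed
  have injR: "inj_on ((*v) A) R"
  proof (rule inj_onI)
    fix r s assume r: "r \<in> R" and s: "s \<in> R" and eq: "A *v r = A *v s"
    obtain u where u: "r = A *v u" using r R_def by auto
    obtain v where v: "s = A *v v" using s R_def by auto
    have "A *v (r - s) = 0" using eq by (simp add: matrix_vector_mult_diff_distrib)
    have rs: "r - s = A *v (u - v)" by (simp add: u v matrix_vector_mult_diff_distrib)
    have "(r - s) \<bullet> (r - s) = (u - v) \<bullet> (A *v (r - s))"
      by (subst (1) rs) (simp only: sym)
    also have "\<dots> = 0" using \<open>A *v (r - s) = 0\<close> by simp
    finally show "r = s" by simp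
  qed
  obtain g where gR: "range g \<subseteq> R" and lg: "linear g" and gA: "\<forall>v\<in>R. g (A *v v) = v"
    using linear_exists_left_inverse_on[OF linA subR injR] by blast
  have P1: "g (A *v r) = r" if "r \<in> R" for r using gA that by blast
  have P2: "g z \<in> R" for z using gR by blast
  have AR: "A *v z \<in> R" for z by (simp add: R_def)
  have P3: "A *v g y = y" if yR: "y \<in> R" for y
  proof -
    obtain u where u: "y = A *v u" using yR R_def by auto
    obtain r where r: "r \<in> R" "A *v r = A *v u" using decomp[of u] by blast
    show ?thesis using P1[OF r(1)] r u by simp
  qed
  have Psym: "g (A *v z) \<bullet> w = z \<bullet> g (A *v w)" for z w
  proof -
    obtain r where r: "r \<in> R" "A *v r = A *v z" and ro: "\<forall>u. (z - r) \<bullet> (A *v u) = 0"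
      using decomp[of z] by blast
    obtain s where s: "s \<in> R" "A *v s = A *v w" and so: "\<forall>u. (w - s) \<bullet> (A *v u) = 0"
      using decomp[of w] by blast
    have gz: "g (A *v z) = r" using P1[OF r(1)] r(2) by simp
    have gw: "g (A *v w) = s" using P1[OF s(1)] s(2) by simp
    obtain a where a: "r = A *v a" using r(1) R_def by auto
    obtain b where b: "s = A *v b" using s(1) R_def by auto
    have "r \<bullet> w = r \<bullet> s + r \<bullet> (w - s)" by (simp add: inner_diff_right)
    also have "r \<bullet> (w - s) = 0" using so a by (simp add: inner_commute)
    also have "z \<bullet> s = r \<bullet> s + (z - r) \<bullet> s" by (simp add: inner_diff_left)
    moreover have "(z - r) \<bullet> s = 0" using ro b by simp
    ultimately show ?thesis using gz gw by simp
  qed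
  define f where "f = (\<lambda>y. g (g (A *v y)))"
  have lf: "linear f" unfolding f_def
    using linear_compose[OF linA linear_compose[OF lg lg]] by (simp add: o_def)
  define X where "X = matrix f"
  have Xv: "X *v y = g (g (A *v y))" for y using fun_cong[OF matrix_vector_mul(2)[OF lf], of y] by (simp add: X_def f_def)
  have c1: "A ** X ** A = A"
  proof -
    have "(A ** X ** A) *v x = A *v x" for x
      using P1[OF AR[of x]] P3[OF AR[of x]] by (simp add: matrix_vector_mul_assoc[symmetric] Xv)
    then show ?thesis by (simp add: matrix_eq)
  qed
  have c2: "X ** A ** X = X"
  proof -
    have "(X ** A ** X) *v y = X *v y" for y
    proof -
      have "A *v g (g (A *v y)) = g (A *v y)" using P3[OF P2] .
      then have "A *v (A *v g (g (A *v y))) = A *v y" using P3[OF AR[of y]] by simp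
      then show ?thesis by (simp add: matrix_vector_mul_assoc[symmetric] Xv)
    qed
    then show ?thesis by (simp add: matrix_eq)
  qed
  have AXv: "(A ** X) *v y = g (A *v y)" for y
    using P3[OF P2] by (simp add: matrix_vector_mul_assoc[symmetric] Xv)
  have XAv: "(X ** A) *v y = g (A *v y)" for y
    using P1[OF AR[of y]] by (simp add: matrix_vector_mul_assoc[symmetric] Xv)
  have c3: "transpose (A ** X) = A ** X"
    by (rule sym_from_inner) (simp add: AXv Psym)
  have c4: "transpose (X ** A) = X ** A"
    by (rule sym_from_inner) (simp add: XAv Psym)
  show ?thesis using c1 c2 c3 c4 unfolding is_pinv_def by blast
qed

lemma pinv_sym:
  fixes A :: "real^'n^'n"
  assumes symA: "transpose A = A"
  shows "is_pinv A (pinv A)" "transpose (pinv A) = pinv A"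
proof -
  obtain X where X: "is_pinv A X" using pinv_exists_sym[OF symA] by blast
  have "pinv A = X" unfolding pinv_def
  proof (rule the_equality)
    show "is_pinv A X" by (rule X)
  next
    fix Y assume "is_pinv A Y" then show "Y = X" by (rule pinv_unique[OF _ X])
  qed
  then show P: "is_pinv A (pinv A)" using X by simp
  define T where "T = transpose (pinv A)"
  have p1: "A ** pinv A ** A = A" and p2: "pinv A ** A ** pinv A = pinv A"
    and p3: "transpose (A ** pinv A) = A ** pinv A" and p4: "transpose (pinv A ** A) = pinv A ** A"
    using P unfolding is_pinv_def by auto
  have t1: "A ** T ** A = A"
  proof -
    have "transpose (A ** pinv A ** A) = A ** T ** A"
      by (simp add: matrix_transpose_mul symA matrix_mul_assoc T_def)
    then show ?thesis using p1 symA by simp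
  qed
  have t2: "T ** A ** T = T"
  proof -
    have "transpose (pinv A ** A ** pinv A) = T ** A ** T"
      by (simp add: matrix_transpose_mul symA matrix_mul_assoc T_def)
    then show ?thesis using p2 by (simp add: T_def)
  qed
  have e1: "A ** T = pinv A ** A"
  proof -
    have "transpose (pinv A ** A) = A ** T" by (simp add: matrix_transpose_mul symA T_def)
    then show ?thesis using p4 by simp
  qed
  have e2: "T ** A = A ** pinv A"
  proof -
    have "transpose (A ** pinv A) = T ** A" by (simp add: matrix_transpose_mul symA T_def)
    then show ?thesis using p3 by simp
  qed
  have "is_pinv A T" unfolding is_pinv_def using t1 t2 e1 e2 p3 p4 by simp
  then show "transpose (pinv A) = pinv A" using pinv_unique P by (simp add: T_def)
qed



lemma W_facts:
  fixes W :: "real^'n^'n"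
  assumes "sym_pos_def W"
  shows "transpose W = W" "W ** matrix_inv W = mat 1" "matrix_inv W ** W = mat 1"
    "transpose (matrix_inv W) = matrix_inv W"
proof -
  show tW: "transpose W = W" using assms by (simp add: sym_pos_def_def)
  have pd: "x \<noteq> 0 \<Longrightarrow> x \<bullet> (W *v x) > 0" for x using assms by (simp add: sym_pos_def_def)
  have "\<forall>x. W *v x = 0 \<longrightarrow> x = 0" using pd by force
  then have "\<exists>B. B ** W = mat 1" by (simp add: matrix_left_invertible_ker)
  then have "invertible W" by (simp add: invertible_left_inverse)
  then have "\<exists>A'. W ** A' = mat 1 \<and> A' ** W = mat 1" by (simp add: invertible_def)
  then have inv: "W ** matrix_inv W = mat 1 \<and> matrix_inv W ** W = mat 1"
    unfolding matrix_inv_def by (rule someI_ex)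
  then show WWi: "W ** matrix_inv W = mat 1" and WiW: "matrix_inv W ** W = mat 1" by auto
  have tt: "transpose (matrix_inv W) ** W = mat 1"
    using arg_cong[OF WWi, of transpose] by (simp add: matrix_transpose_mul tW)
  have "transpose (matrix_inv W) = transpose (matrix_inv W) ** (W ** matrix_inv W)"
    using WWi by simp
  also have "\<dots> = (transpose (matrix_inv W) ** W) ** matrix_inv W" by (simp add: matrix_mul_assoc)
  also have "\<dots> = matrix_inv W" using tt by simp
  finally show "transpose (matrix_inv W) = matrix_inv W" .
qed

lemma H_facts:
  fixes W :: "real^'n^'n" and S :: "real^'t^'n"
  assumes tW: "transpose W = W"
  shows "transpose (Hmat W S) = Hmat W S" "Hmat W S ** W ** Hmat W S = Hmat W S"
    "Pimat W S = Hmat W S ** W"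
proof -
  define A where "A = transpose S ** W ** S"
  have tA: "transpose A = A" by (simp add: A_def matrix_transpose_mul tW matrix_mul_assoc)
  note P = pinv_sym[OF tA]
  have XAX: "pinv A ** A ** pinv A = pinv A" using P(1) by (simp add: is_pinv_def)
  show "transpose (Hmat W S) = Hmat W S"
    using P(2) by (simp add: Hmat_def A_def[symmetric] matrix_transpose_mul matrix_mul_assoc)
  have "Hmat W S ** W ** Hmat W S = S ** (pinv A ** A ** pinv A) ** transpose S"
    by (simp add: Hmat_def A_def[symmetric] matrix_mul_assoc) (simp add: A_def matrix_mul_assoc)
  then show "Hmat W S ** W ** Hmat W S = Hmat W S" using XAX by (simp add: Hmat_def A_def)
  show "Pimat W S = Hmat W S ** W" by (simp add: Pimat_def Hmat_def)
qed

lemma core: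
  fixes W Wi H :: "real^'n^'n" and M N :: "real^'n^'d"
  assumes tW: "transpose W = W" and WWi: "W ** Wi = mat 1" and WiW: "Wi ** W = mat 1"
    and tWi: "transpose Wi = Wi" and tH: "transpose H = H" and HWH: "H ** W ** H = H"
  shows "wnormsq Wi (M ** (mat 1 - H ** W) + N ** (H ** W))
          = wnormsq Wi (M ** (mat 1 - H ** W)) + wnormsq Wi (N ** (H ** W))"
    "wnormsq Wi (N ** (H ** W)) = wnormsq H N"
    "wnormsq Wi (M ** (mat 1 - H ** W)) = wnormsq Wi M - wnormsq H M"
proof -
  define P where "P = H ** W"
  have tP: "transpose P = W ** H" by (simp add: P_def matrix_transpose_mul tW tH)
  have PWi: "P ** Wi = H" by (simp add: P_def matrix_mul_assoc[symmetric] WWi)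
  have WitP: "Wi ** transpose P = H" by (simp add: tP matrix_mul_assoc WiW)
  have PWiP: "P ** Wi ** transpose P = H" by (simp add: PWi tP matrix_mul_assoc HWH)
  have PH: "P ** H = H" by (simp add: P_def HWH)
  have HtP: "H ** transpose P = H" by (simp add: tP matrix_mul_assoc HWH)
  have Z1: "(mat 1 - P) ** Wi ** transpose P = 0"
    by (simp add: mm_diff_rdistrib WitP PH flip: matrix_mul_assoc)
  have Z2: "P ** Wi ** transpose (mat 1 - P) = 0"
    by (simp add: transpose_diff' mm_diff_ldistrib PWi HtP)
  have Q: "(mat 1 - P) ** Wi ** transpose (mat 1 - P) = Wi - H"
    by (simp add: transpose_diff' mm_diff_ldistrib mm_diff_rdistrib PWi WitP PWiP PH HtP flip: matrix_mul_assoc)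
  define X where "X = M ** (mat 1 - P)"
  define Y where "Y = N ** P"
  have XY: "X ** Wi ** transpose Y = 0"
  proof -
    have "X ** Wi ** transpose Y = M ** ((mat 1 - P) ** Wi ** transpose P) ** transpose N"
      by (simp add: X_def Y_def matrix_transpose_mul matrix_mul_assoc)
    then show ?thesis using Z1 by simp
  qed
  have YX: "Y ** Wi ** transpose X = 0"
  proof -
    have "Y ** Wi ** transpose X = N ** (P ** Wi ** transpose (mat 1 - P)) ** transpose M"
      by (simp add: X_def Y_def matrix_transpose_mul matrix_mul_assoc)
    then show ?thesis using Z2 by simp
  qed
  have "wnormsq Wi (X + Y) = wnormsq Wi X + wnormsq Wi Y"
    unfolding wnormsq_def
    using XY YX
    by (simp add: transpose_add' matrix_add_ldistrib mm_add_rdistrib trace_add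
        flip: matrix_mul_assoc)
  then show "wnormsq Wi (M ** (mat 1 - H ** W) + N ** (H ** W))
          = wnormsq Wi (M ** (mat 1 - H ** W)) + wnormsq Wi (N ** (H ** W))"
    by (simp add: X_def Y_def P_def)
  have "wnormsq Wi (N ** P) = trace (N ** (P ** Wi ** transpose P) ** transpose N)"
    unfolding wnormsq_def by (simp add: matrix_transpose_mul matrix_mul_assoc)
  then show "wnormsq Wi (N ** (H ** W)) = wnormsq H N"
    unfolding P_def[symmetric] wnormsq_def by (simp add: PWiP)
  have "wnormsq Wi (M ** (mat 1 - P)) = trace (M ** ((mat 1 - P) ** Wi ** transpose (mat 1 - P)) ** transpose M)"
    unfolding wnormsq_def by (simp add: matrix_transpose_mul matrix_mul_assoc)
  then show "wnormsq Wi (M ** (mat 1 - H ** W)) = wnormsq Wi M - wnormsq H M"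
  proof -
    assume e0: "wnormsq Wi (M ** (mat 1 - P)) = trace (M ** ((mat 1 - P) ** Wi ** transpose (mat 1 - P)) ** transpose M)"
    have "wnormsq Wi (M ** (mat 1 - P)) = trace (M ** (Wi - H) ** transpose M)" using e0 by (simp only: Q)
    also have "\<dots> = wnormsq Wi M - wnormsq H M"
      by (simp add: wnormsq_def mm_diff_ldistrib mm_diff_rdistrib trace_sub)
    finally show ?thesis by (simp add: P_def)
  qed
qed



lemma quad_zero:
  fixes a b :: real
  assumes "\<And>t. 0 \<le> 2*t*a + t^2*b"
  shows "a = 0"
proof -
  define s where "s = \<bar>b\<bar> + 1"
  have s: "s > 0" "b - 2 * s < 0" by (auto simp: s_def)
  have "s^2 * (2*(-a/s)*a + (-a/s)^2*b) = a^2*(b - 2 * s)"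
    using s by (simp add: field_simps power2_eq_square)
  moreover have "0 \<le> s^2 * (2*(-a/s)*a + (-a/s)^2*b)" using assms[of "-a/s"] by simp
  ultimately have "0 \<le> a^2*(b - 2 * s)" by simp
  moreover have "a^2 * (b - 2 * s) \<le> 0" by (rule mult_nonneg_nonpos) (use s in auto)
  ultimately have "a^2 * (b - 2 * s) = 0" by linarith
  then have "a^2 = 0" using s(2) by simp
  then show ?thesis by simp
qed

lemma eig_finite:
  fixes G W :: "real^'n^'n"
  assumes tW: "transpose W = W" and pd: "\<And>x. x \<noteq> 0 \<Longrightarrow> x \<bullet> (W *v x) > 0"
    and tG: "transpose G = G"
  shows "finite {c. \<exists>v. v \<noteq> 0 \<and> (G ** W) *v v = c *\<^sub>R v}"
proof -
  define E where "E = {c. \<exists>v. v \<noteq> 0 \<and> (G ** W) *v v = c *\<^sub>R v}"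
  define e where "e c = (SOME v. v \<noteq> 0 \<and> (G ** W) *v v = c *\<^sub>R v)" for c
  have e: "e c \<noteq> 0 \<and> (G ** W) *v e c = c *\<^sub>R e c" if "c \<in> E" for c
    unfolding e_def using that E_def by (metis (mono_tags, lifting) mem_Collect_eq someI_ex)
  have symW: "(W *v x) \<bullet> y = x \<bullet> (W *v y)" for x y by (rule sym_inner[OF tW])
  have symG: "(G *v x) \<bullet> y = x \<bullet> (G *v y)" for x y by (rule sym_inner[OF tG])
  have ortho: "e c1 \<bullet> (W *v e c2) = 0" if c1: "c1 \<in> E" and c2: "c2 \<in> E" and ne: "c1 \<noteq> c2" for c1 c2
  proof -
    define v1 where "v1 = e c1"
    define v2 where "v2 = e c2"
    have B1: "G *v (W *v v1) = c1 *\<^sub>R v1" using e[OF c1] by (simp add: v1_def matrix_vector_mul_assoc)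
    have B2: "G *v (W *v v2) = c2 *\<^sub>R v2" using e[OF c2] by (simp add: v2_def matrix_vector_mul_assoc)
    have "(W *v v1) \<bullet> (G *v (W *v v2)) = (G *v (W *v v1)) \<bullet> (W *v v2)" by (simp add: symG)
    then have "c2 * ((W *v v1) \<bullet> v2) = c1 * (v1 \<bullet> (W *v v2))" by (simp add: B1 B2)
    then have "c2 * (v1 \<bullet> (W *v v2)) = c1 * (v1 \<bullet> (W *v v2))" by (simp only: symW)
    then show ?thesis using ne by (auto simp: v1_def v2_def)
  qed
  have inj: "inj_on e E"
  proof (rule inj_onI)
    fix c1 c2 assume c1: "c1 \<in> E" and c2: "c2 \<in> E" and eq: "e c1 = e c2"
    have "c1 *\<^sub>R e c1 = (G ** W) *v e c1" using e[OF c1] by simp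
    also have "\<dots> = (G ** W) *v e c2" using eq by simp
    also have "\<dots> = c2 *\<^sub>R e c1" using e[OF c2] eq by simp
    finally show "c1 = c2" using e[OF c1] by (metis scaleR_cancel_right)
  qed
  have ind: "independent (e ` E)"
    unfolding independent_explicit_finite_subsets
  proof (intro allI impI ballI)
    fix T u v assume T: "T \<subseteq> e ` E" and fT: "finite T" and su: "(\<Sum>w\<in>T. u w *\<^sub>R w) = 0" and vT: "v \<in> T"
    obtain cv where cv: "cv \<in> E" "v = e cv" using T vT by blast
    have z: "w \<bullet> (W *v v) = 0" if wT: "w \<in> T - {v}" for w
    proof -
      obtain cw where cw: "cw \<in> E" "w = e cw" using T wT by blast
      have "cw \<noteq> cv" using wT cw cv by auto
      then show ?thesis using ortho[OF cw(1) cv(1)] cw cv by simp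
    qed
    have "0 = (\<Sum>w\<in>T. u w *\<^sub>R w) \<bullet> (W *v v)" using su by simp
    also have "\<dots> = (\<Sum>w\<in>T. u w * (w \<bullet> (W *v v)))" by (simp add: inner_sum_left)
    also have "\<dots> = u v * (v \<bullet> (W *v v)) + (\<Sum>w\<in>T - {v}. u w * (w \<bullet> (W *v v)))"
      by (rule sum.remove[OF fT vT])
    also have "(\<Sum>w\<in>T - {v}. u w * (w \<bullet> (W *v v))) = 0" using z by simp
    finally have "u v * (v \<bullet> (W *v v)) = 0" by simp
    moreover have "v \<bullet> (W *v v) > 0" using pd e[OF cv(1)] cv(2) by simp
    ultimately show "u v = 0" by simp
  qed
  have "finite (e ` E)" using independent_bound[OF ind] by simp
  then show ?thesis using finite_imageD[OF _ inj] by (simp add: E_def)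
qed

lemma quad_expand:
  fixes A :: "real^'n^'n"
  assumes tA: "transpose A = A"
  shows "(x + t *\<^sub>R h) \<bullet> (A *v (x + t *\<^sub>R h)) = x \<bullet> (A *v x) + 2*t*(h \<bullet> (A *v x)) + t^2*(h \<bullet> (A *v h))"
proof -
  have s: "x \<bullet> (A *v h) = h \<bullet> (A *v x)" using sym_inner[OF tA, of h x] by (simp add: inner_commute)
  show ?thesis
    by (simp add: matrix_vector_right_distrib matrix_vector_mult_scaleR inner_add_left
        inner_add_right s power2_eq_square algebra_simps)
qed


lemma eig_bound:
  fixes G W Wi :: "real^'n^'n"
  assumes tW: "transpose W = W" and pd: "\<And>x. x \<noteq> 0 \<Longrightarrow> x \<bullet> (W *v x) > 0"
    and tG: "transpose G = G" and WWi: "W ** Wi = mat 1" and WiW: "Wi ** W = mat 1"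
  shows "lambda_min (G ** W) * (m \<bullet> (Wi *v m)) \<le> m \<bullet> (G *v m)"
proof -
  define E where "E = {c. \<exists>v. v \<noteq> 0 \<and> (G ** W) *v v = c *\<^sub>R v}"
  have finE: "finite E" unfolding E_def by (rule eig_finite[OF tW pd tG])
  define K where "K = W ** G ** W"
  have tK: "transpose K = K" by (simp add: K_def matrix_transpose_mul tW tG matrix_mul_assoc)
  have symW: "(W *v x) \<bullet> y = x \<bullet> (W *v y)" for x y by (rule sym_inner[OF tW])
  have symK: "(K *v x) \<bullet> y = x \<bullet> (K *v y)" for x y by (rule sym_inner[OF tK])
  have Wnn: "0 \<le> x \<bullet> (W *v x)" for x using pd[of x] by (cases "x = 0") auto
  define f where "f v = (v \<bullet> (K *v v)) / (v \<bullet> (W *v v))" for v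
  have contK: "continuous_on UNIV ((*v) K)" by (simp add: linear_continuous_on)
  have contW: "continuous_on UNIV ((*v) W)" by (simp add: linear_continuous_on)
  have cont: "continuous_on (sphere 0 1) f"
    unfolding f_def
  proof (rule continuous_on_divide)
    show "continuous_on (sphere 0 1) (\<lambda>x. x \<bullet> (K *v x))"
      by (intro continuous_intros continuous_on_subset[OF contK]) auto
    show "continuous_on (sphere 0 1) (\<lambda>x. x \<bullet> (W *v x))"
      by (intro continuous_intros continuous_on_subset[OF contW]) auto
    show "\<forall>x\<in>sphere 0 1. x \<bullet> (W *v x) \<noteq> 0"
    proof
      fix x :: "real^'n" assume "x \<in> sphere 0 1"
      then have "x \<noteq> 0" by auto
      then show "x \<bullet> (W *v x) \<noteq> 0" using pd[of x] by simp
    qed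
  qed
  have ne: "sphere (0::real^'n) 1 \<noteq> {}" by simp
  obtain v0 where v0: "v0 \<in> sphere 0 1" and minv: "\<And>y. y \<in> sphere 0 1 \<Longrightarrow> f v0 \<le> f y"
    using continuous_attains_inf[OF compact_sphere ne cont] by blast
  define \<mu> where "\<mu> = f v0"
  have v0nz: "v0 \<noteq> 0" using v0 by auto
  have hom: "f (c *\<^sub>R v) = f v" if "c \<noteq> 0" for c v
    using that by (simp add: f_def matrix_vector_mult_scaleR)
  have ray: "\<mu> * (v \<bullet> (W *v v)) \<le> v \<bullet> (K *v v)" for v
  proof (cases "v = 0")
    case True then show ?thesis by simp
  next
    case False
    define u where "u = (1 / norm v) *\<^sub>R v"
    have "u \<in> sphere 0 1" using False by (simp add: u_def)
    then have "\<mu> \<le> f u" using minv by (simp add: \<mu>_def)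
    also have "f u = f v" using False by (simp add: u_def hom)
    finally have "\<mu> \<le> (v \<bullet> (K *v v)) / (v \<bullet> (W *v v))" by (simp add: f_def)
    then show ?thesis using pd[OF False] by (simp add: pos_le_divide_eq)
  qed
  have v00: "v0 \<bullet> (K *v v0) - \<mu> * (v0 \<bullet> (W *v v0)) = 0"
    using pd[OF v0nz] by (simp add: \<mu>_def f_def)
  have lin0: "h \<bullet> (K *v v0) - \<mu> * (h \<bullet> (W *v v0)) = 0" for h
  proof (rule quad_zero)
    fix t :: real
    have "(v0 + t *\<^sub>R h) \<bullet> (K *v (v0 + t *\<^sub>R h)) - \<mu> * ((v0 + t *\<^sub>R h) \<bullet> (W *v (v0 + t *\<^sub>R h)))
      = (v0 \<bullet> (K *v v0) - \<mu> * (v0 \<bullet> (W *v v0))) + 2*t*(h \<bullet> (K *v v0) - \<mu> * (h \<bullet> (W *v v0)))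
        + t^2*(h \<bullet> (K *v h) - \<mu> * (h \<bullet> (W *v h)))"
      unfolding quad_expand[OF tK] quad_expand[OF tW] by (simp add: algebra_simps)
    moreover have "0 \<le> (v0 + t *\<^sub>R h) \<bullet> (K *v (v0 + t *\<^sub>R h)) - \<mu> * ((v0 + t *\<^sub>R h) \<bullet> (W *v (v0 + t *\<^sub>R h)))"
      using ray[of "v0 + t *\<^sub>R h"] by simp
    ultimately show "0 \<le> 2*t*(h \<bullet> (K *v v0) - \<mu> * (h \<bullet> (W *v v0)))
        + t^2*(h \<bullet> (K *v h) - \<mu> * (h \<bullet> (W *v h)))" using v00 by simp
  qed
  define D where "D = K *v v0 - \<mu> *\<^sub>R (W *v v0)"
  have "D \<bullet> D = D \<bullet> (K *v v0) - \<mu> * (D \<bullet> (W *v v0))"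
    by (simp add: D_def inner_diff_right)
  also have "\<dots> = 0" by (rule lin0)
  finally have "K *v v0 - \<mu> *\<^sub>R (W *v v0) = 0" by (simp add: D_def)
  then have "W *v (G *v (W *v v0)) = \<mu> *\<^sub>R (W *v v0)"
    by (simp add: K_def matrix_vector_mul_assoc matrix_mul_assoc)
  then have "Wi *v (W *v (G *v (W *v v0))) = Wi *v (\<mu> *\<^sub>R (W *v v0))" by simp
  then have "(G ** W) *v v0 = \<mu> *\<^sub>R v0"
    by (simp add: matrix_vector_mul_assoc matrix_vector_mult_scaleR WiW matrix_mul_assoc)
  then have muE: "\<mu> \<in> E" using v0nz by (auto simp: E_def)
  have lmin: "lambda_min (G ** W) \<le> \<mu>"
    unfolding lambda_min_def E_def[symmetric] using finE muE by simp
  define v where "v = Wi *v m"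
  have mv: "m = W *v v" by (simp add: v_def matrix_vector_mul_assoc WWi)
  have "m \<bullet> (Wi *v m) = v \<bullet> (W *v v)" by (simp add: mv matrix_vector_mul_assoc WiW symW)
  moreover have "m \<bullet> (G *v m) = v \<bullet> (K *v v)" by (simp add: mv K_def matrix_vector_mul_assoc symW matrix_mul_assoc)
  moreover have "lambda_min (G ** W) * (v \<bullet> (W *v v)) \<le> \<mu> * (v \<bullet> (W *v v))"
    using lmin Wnn by (simp add: mult_right_mono)
  ultimately show ?thesis using ray[of v] by simp
qed



lemma trace_quad:
  fixes M :: "real^'n^'d" and C :: "real^'n^'n"
  shows "trace (M ** C ** transpose M) = (\<Sum>k\<in>UNIV. (M$k) \<bullet> (C *v (M$k)))"
  apply (simp add: trace_def matrix_matrix_mult_def transpose_def inner_vec_def matrix_vector_mult_def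
      sum_distrib_left sum_distrib_right mult.assoc mult.left_commute)
  by (rule sum.cong[OF refl], rule sum.swap)

lemma trace_scaleR: "trace (c *\<^sub>R (A::real^'n^'n)) = c * trace A"
  by (simp add: trace_def sum_distrib_left)

lemma wnormsq_linear: "bounded_linear (\<lambda>C::real^'n^'n. wnormsq C (N::real^'n^'d))"
proof -
  have "linear (\<lambda>C::real^'n^'n. wnormsq C N)"
  proof (rule linearI)
    fix B C :: "real^'n^'n" and c :: real
    show "wnormsq (B + C) N = wnormsq B N + wnormsq C N"
      by (simp add: wnormsq_def matrix_add_ldistrib mm_add_rdistrib trace_add)
    show "wnormsq (c *\<^sub>R B) N = c *\<^sub>R wnormsq B N"
      by (simp add: wnormsq_def matrix_scalar_ac scalar_matrix_assoc[symmetric] trace_scaleR)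
  qed
  then show ?thesis by (simp add: linear_conv_bounded_linear)
qed

lemma rmul_linear: "bounded_linear (\<lambda>C::real^'n^'n. C ** (W::real^'n^'n))"
proof -
  have "linear (\<lambda>C::real^'n^'n. C ** W)"
  proof (rule linearI)
    fix B C :: "real^'n^'n" and c :: real
    show "(B + C) ** W = B ** W + C ** W" by (rule mm_add_rdistrib)
    show "(c *\<^sub>R B) ** W = c *\<^sub>R (B ** W)" by (simp add: scalar_matrix_assoc)
  qed
  then show ?thesis by (simp add: linear_conv_bounded_linear)
qed

lemma transpose_linear: "bounded_linear (\<lambda>C::real^'n^'n. transpose C)"
proof -
  have "linear (\<lambda>C::real^'n^'n. transpose C)"
  proof (rule linearI)
    fix B C :: "real^'n^'n" and c :: real
    show "transpose (B + C) = transpose B + transpose C" by (rule transpose_add')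
    show "transpose (c *\<^sub>R B) = c *\<^sub>R transpose B" by (rule transpose_scalar)
  qed
  then show ?thesis by (simp add: linear_conv_bounded_linear)
qed

lemma psd_entry:
  fixes A Wi :: "real^'n^'n"
  assumes tA: "transpose A = A" and nn: "\<And>x. 0 \<le> x \<bullet> (A *v x)"
    and le: "\<And>x. x \<bullet> (A *v x) \<le> x \<bullet> (Wi *v x)"
  shows "\<bar>h \<bullet> (A *v x)\<bar> \<le> x \<bullet> (Wi *v x) + h \<bullet> (Wi *v h)"
proof -
  have p: "0 \<le> x \<bullet> (A *v x) + 2*1*(h \<bullet> (A *v x)) + 1^2*(h \<bullet> (A *v h))"
    using nn[of "x + 1 *\<^sub>R h"] unfolding quad_expand[OF tA] .
  have m: "0 \<le> x \<bullet> (A *v x) + 2*(-1)*(h \<bullet> (A *v x)) + (-1)^2*(h \<bullet> (A *v h))"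
    using nn[of "x + (-1) *\<^sub>R h"] unfolding quad_expand[OF tA] .
  show ?thesis using p m le[of x] le[of h] nn[of x] nn[of h] by (simp add: abs_le_iff)
qed

lemma H_psd:
  fixes W Wi H :: "real^'n^'n"
  assumes tW: "transpose W = W" and pd: "\<And>x. x \<noteq> 0 \<Longrightarrow> x \<bullet> (W *v x) > 0"
    and WWi: "W ** Wi = mat 1" and WiW: "Wi ** W = mat 1" and tWi: "transpose Wi = Wi"
    and tH: "transpose H = H" and HWH: "H ** W ** H = H"
  shows "0 \<le> x \<bullet> (H *v x)" "x \<bullet> (H *v x) \<le> x \<bullet> (Wi *v x)"
proof -
  have Wnn: "0 \<le> z \<bullet> (W *v z)" for z using pd[of z] by (cases "z = 0") auto
  have symW: "(W *v a) \<bullet> b = a \<bullet> (W *v b)" for a b by (rule sym_inner[OF tW])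
  have symH: "(H *v a) \<bullet> b = a \<bullet> (H *v b)" for a b by (rule sym_inner[OF tH])
  have symWi: "(Wi *v a) \<bullet> b = a \<bullet> (Wi *v b)" for a b by (rule sym_inner[OF tWi])
  have HWHv: "H *v (W *v (H *v x)) = H *v x" for x
    using HWH by (simp add: matrix_vector_mul_assoc matrix_mul_assoc)
  have "x \<bullet> (H *v x) = x \<bullet> (H *v (W *v (H *v x)))" by (simp add: HWHv)
  also have "\<dots> = (H *v x) \<bullet> (W *v (H *v x))" by (simp add: symH[symmetric])
  finally show xHx: "0 \<le> x \<bullet> (H *v x)" using Wnn by simp
  define y where "y = x - W *v (H *v x)"
  have WiW': "Wi *v (W *v z) = z" for z using WiW by (simp add: matrix_vector_mul_assoc)
  have WWi': "W *v (Wi *v z) = z" for z using WWi by (simp add: matrix_vector_mul_assoc)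
  have "0 \<le> (Wi *v y) \<bullet> (W *v (Wi *v y))" by (rule Wnn)
  also have "\<dots> = (Wi *v y) \<bullet> y" by (simp add: WWi')
  also have "\<dots> = y \<bullet> (Wi *v y)" by (simp add: symWi)
  also have "\<dots> = x \<bullet> (Wi *v x) - x \<bullet> (H *v x)"
  proof -
    have Wiy: "Wi *v y = Wi *v x - H *v x"
      by (simp add: y_def matrix_vector_mult_diff_distrib WiW')
    have a: "(W *v (H *v x)) \<bullet> (Wi *v x) = x \<bullet> (H *v x)"
      using symW[of "H *v x" "Wi *v x"] by (simp add: WWi' inner_commute)
    have b: "(W *v (H *v x)) \<bullet> (H *v x) = x \<bullet> (H *v x)"
      using symH[of x "W *v (H *v x)"] by (simp add: HWHv inner_commute)
    have c: "x \<bullet> (Wi *v x) - x \<bullet> (H *v x) - ((W *v (H *v x)) \<bullet> (Wi *v x) - (W *v (H *v x)) \<bullet> (H *v x))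
        = x \<bullet> (Wi *v x) - x \<bullet> (H *v x)" using a b by simp
    show ?thesis unfolding Wiy using c by (simp add: y_def inner_diff_left inner_diff_right)
  qed
  finally show "x \<bullet> (H *v x) \<le> x \<bullet> (Wi *v x)" by simp
qed

lemma entry_inner: "(A::real^'n^'n) $ i $ j = axis i 1 \<bullet> (A *v axis j 1)"
  by (simp add: matrix_vector_mult_basis column_def inner_commute[of "axis i 1"] inner_axis)

lemma norm_matrix_le: "norm (A::real^'n^'n) \<le> (\<Sum>i\<in>UNIV. \<Sum>j\<in>UNIV. \<bar>A $ i $ j\<bar>)"
proof -
  have "norm A \<le> (\<Sum>i\<in>UNIV. norm (A $ i))"
    by (simp add: norm_vec_def L2_set_le_sum)
  also have "\<dots> \<le> (\<Sum>i\<in>UNIV. \<Sum>j\<in>UNIV. \<bar>A $ i $ j\<bar>)"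
    by (rule sum_mono) (rule norm_le_l1_cart)
  finally show ?thesis .
qed



theorem lemma3p8:
  fixes W :: "real^'n^'n" and D :: "(real^'t^'n) measure" and M N :: "real^'n^'d"
  assumes "sym_pos_def W"
    and "prob_space D"
    and "sets D = sets borel"
    and "(\<lambda>S. Hmat W S) \<in> borel_measurable D"
  shows "(\<forall>S::real^'t^'n. wnormsq (matrix_inv W) (M ** (mat 1 - Pimat W S) + N ** Pimat W S)
            = wnormsq (matrix_inv W) (M ** (mat 1 - Pimat W S))
              + wnormsq (matrix_inv W) (N ** Pimat W S))
    \<and> (\<integral>S. wnormsq (matrix_inv W) (N ** Pimat W S) \<partial>D) = wnormsq (\<integral>S. Hmat W S \<partial>D) N
    \<and> (\<integral>S. wnormsq (matrix_inv W) (M ** (mat 1 - Pimat W S) + N ** Pimat W S) \<partial>D)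
        \<le> (1 - kappa W D) * wnormsq (matrix_inv W) M + wnormsq (\<integral>S. Hmat W S \<partial>D) N"
proof -
  interpret prob_space D by (rule assms(2))
  define Wi where "Wi = matrix_inv W"
  note Wf = W_facts[OF assms(1), folded Wi_def]
  have tW: "transpose W = W" and WWi: "W ** Wi = mat 1" and WiW: "Wi ** W = mat 1"
    and tWi: "transpose Wi = Wi" using Wf by auto
  have pd: "\<And>x. x \<noteq> 0 \<Longrightarrow> x \<bullet> (W *v x) > 0" using assms(1) by (simp add: sym_pos_def_def)
  define Hf where "Hf = (\<lambda>S::real^'t^'n. Hmat W S)"
  have tH: "transpose (Hf S) = Hf S" for S :: "real^'t^'n" unfolding Hf_def by (rule H_facts(1)[OF tW])
  have HWH: "Hf S ** W ** Hf S = Hf S" for S :: "real^'t^'n" unfolding Hf_def by (rule H_facts(2)[OF tW])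
  have PiS: "Pimat W S = Hf S ** W" for S :: "real^'t^'n" unfolding Hf_def by (rule H_facts(3)[OF tW])
  note cr = core[OF tW WWi WiW tWi tH HWH]
  have c1: "wnormsq Wi (M ** (mat 1 - Pimat W S) + N ** Pimat W S)
            = wnormsq Wi (M ** (mat 1 - Pimat W S)) + wnormsq Wi (N ** Pimat W S)" for S :: "real^'t^'n"
    unfolding PiS by (rule cr(1))
  have c2: "wnormsq Wi (N ** Pimat W S) = wnormsq (Hf S) N" for S :: "real^'t^'n"
    unfolding PiS by (rule cr(2))
  have c3: "wnormsq Wi (M ** (mat 1 - Pimat W S) + N ** Pimat W S)
            = wnormsq Wi M - wnormsq (Hf S) M + wnormsq (Hf S) N" for S :: "real^'t^'n"
    unfolding c1 unfolding PiS cr(2) cr(3) by simp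
  define q where "q i = axis i 1 \<bullet> (Wi *v axis i 1)" for i :: 'n
  define Bd where "Bd = (\<Sum>i\<in>UNIV. \<Sum>j\<in>UNIV. q j + q i)"
  have bnd: "norm (Hf S) \<le> Bd" for S :: "real^'t^'n"
  proof -
    note ps = H_psd[OF tW pd WWi WiW tWi tH HWH]
    have "\<bar>Hf S $ i $ j\<bar> \<le> q j + q i" for i j
      unfolding entry_inner q_def by (rule psd_entry[OF tH ps])
    then have "(\<Sum>i\<in>UNIV. \<Sum>j\<in>UNIV. \<bar>Hf S $ i $ j\<bar>) \<le> Bd"
      unfolding Bd_def by (intro sum_mono) auto
    then show ?thesis using norm_matrix_le[of "Hf S"] by linarith
  qed
  have intH: "integrable D Hf"
    by (rule integrable_const_bound[where B = Bd]) (use bnd assms(4) in \<open>auto simp: Hf_def\<close>)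
  define G where "G = (\<integral>S. Hf S \<partial>D)"
  have G_eq: "(\<integral>S. Hmat W S \<partial>D) = G" by (simp add: G_def Hf_def)
  have tG: "transpose G = G"
  proof -
    have "(\<integral>S. transpose (Hf S) \<partial>D) = transpose G"
      unfolding G_def by (rule integral_bounded_linear[OF transpose_linear intH])
    then show ?thesis using tH by (simp add: G_def)
  qed
  have intq: "integrable D (\<lambda>S. wnormsq (Hf S) X)" for X :: "real^'n^'d"
    by (rule integrable_bounded_linear[OF wnormsq_linear intH])
  have intq': "(\<integral>S. wnormsq (Hf S) X \<partial>D) = wnormsq G X" for X :: "real^'n^'d"
    unfolding G_def by (rule integral_bounded_linear[OF wnormsq_linear intH])
  have claim2: "(\<integral>S. wnormsq Wi (N ** Pimat W S) \<partial>D) = wnormsq G N"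
    by (simp add: c2 intq')
  have I3: "(\<integral>S. wnormsq Wi (M ** (mat 1 - Pimat W S) + N ** Pimat W S) \<partial>D)
      = wnormsq Wi M - wnormsq G M + wnormsq G N"
  proof -
    have "(\<integral>S. wnormsq Wi (M ** (mat 1 - Pimat W S) + N ** Pimat W S) \<partial>D)
        = (\<integral>S. (wnormsq Wi M - wnormsq (Hf S) M) + wnormsq (Hf S) N \<partial>D)"
      by (simp only: c3)
    also have "\<dots> = (\<integral>S. (wnormsq Wi M - wnormsq (Hf S) M) \<partial>D) + (\<integral>S. wnormsq (Hf S) N \<partial>D)"
      by (rule Bochner_Integration.integral_add) (use intq in auto)
    also have "(\<integral>S. (wnormsq Wi M - wnormsq (Hf S) M) \<partial>D) = (\<integral>S. wnormsq Wi M \<partial>D) - (\<integral>S. wnormsq (Hf S) M \<partial>D)"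
      by (rule Bochner_Integration.integral_diff) (use intq in auto)
    finally show ?thesis by (simp add: intq' prob_space)
  qed
  have kap: "kappa W D = lambda_min (G ** W)"
  proof -
    have "(\<integral>S. Pimat W S \<partial>D) = (\<integral>S. Hf S ** W \<partial>D)" by (simp add: PiS)
    also have "\<dots> = G ** W" unfolding G_def by (rule integral_bounded_linear[OF rmul_linear intH])
    finally show ?thesis by (simp add: kappa_def)
  qed
  have kb: "lambda_min (G ** W) * wnormsq Wi M \<le> wnormsq G M"
  proof -
    have "lambda_min (G ** W) * wnormsq Wi M = (\<Sum>k\<in>UNIV. lambda_min (G ** W) * ((M$k) \<bullet> (Wi *v (M$k))))"
      by (simp add: wnormsq_def trace_quad sum_distrib_left)
    also have "\<dots> \<le> (\<Sum>k\<in>UNIV. (M$k) \<bullet> (G *v (M$k)))"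
      by (rule sum_mono) (rule eig_bound[OF tW pd tG WWi WiW])
    also have "\<dots> = wnormsq G M" by (simp add: wnormsq_def trace_quad)
    finally show ?thesis .
  qed
  have claim3: "(\<integral>S. wnormsq Wi (M ** (mat 1 - Pimat W S) + N ** Pimat W S) \<partial>D)
      \<le> (1 - kappa W D) * wnormsq Wi M + wnormsq G N"
    unfolding I3 kap using kb by (simp add: left_diff_distrib)
  show ?thesis using c1 claim2 claim3 unfolding G_eq Wi_def[symmetric] by blast
qed

end
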